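(* For any infinite subset $A$ of an almost Clifford semigroup $S$, the set $AA=\{xy:x,y\in A\}$ is infinite.
   Context: The Clifford part $H(S)$ of a semigroup $S$ is the union of all subgroups of $S$; $S$ is almost Clifford if $S\setminus H(S)$ is finite. *)

theory Defs
  imports Main
begin

definition is_subgroup :: "'a::semigroup_mult set \<Rightarrow> bool" where
  "is_subgroup G \<longleftrightarrow>
     (\<forall>x\<in>G. \<forall>y\<in>G. x * y \<in> G) \<and>
     (\<exists>e\<in>G. (\<forall>g\<in>G. e * g = g \<and> g * e = g) \<and>
             (\<forall>g\<in>G. \<exists>h\<in>G. g * h = e \<and> h * g = e))"

definition clifford_part :: "'a::semigroup_mult set" where
  "clifford_part = \<Union> {G. is_subgroup G}"

definition almost_clifford :: "'a::semigroup_mult itself \<Rightarrow> bool" where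
  "almost_clifford _ \<longleftrightarrow> finite (UNIV - (clifford_part :: 'a set))"

end

theory Submission
  imports Defs
begin

lemma ident_unique:
  fixes c :: "'a::semigroup_mult"
  assumes "e \<in> G" "\<forall>g\<in>G. e * g = g \<and> g * e = g" "\<forall>g\<in>G. \<exists>h\<in>G. g * h = e \<and> h * g = e"
    and "f \<in> K" "\<forall>g\<in>K. f * g = g \<and> g * f = g" "\<forall>g\<in>K. \<exists>h\<in>K. g * h = f \<and> h * g = f"
    and "c \<in> G" "c \<in> K"
  shows "e = f"
proof -
  obtain h where h: "h \<in> G" "h * c = e" using assms by blast
  obtain d where d: "d \<in> K" "c * d = f" using assms by blast
  have "e * f = h * (c * f)" using h by (simp add: mult.assoc[symmetric])
  also have "\<dots> = e" using assms h by simp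
  finally have 1: "e * f = e" .
  have "e * f = (e * c) * d" using d by (simp add: mult.assoc)
  also have "\<dots> = f" using assms d by simp
  finally show ?thesis using 1 by simp
qed

lemma in_cp:
  assumes "(x::'a::semigroup_mult) \<in> clifford_part"
  obtains G e where "x \<in> G" "\<forall>x\<in>G. \<forall>y\<in>G. x * y \<in> G" "e \<in> G"
    "\<forall>g\<in>G. e * g = g \<and> g * e = g" "\<forall>g\<in>G. \<exists>h\<in>G. g * h = e \<and> h * g = e"
  using assms unfolding clifford_part_def is_subgroup_def by blast

theorem mainTheorem20:
  fixes A :: "'a::semigroup_mult set"
  assumes "almost_clifford TYPE('a)"
    and "infinite A"
  shows "infinite {x * y | x y. x \<in> A \<and> y \<in> A}"
proof
  let ?P = "{x * y | x y. x \<in> A \<and> y \<in> A}"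
  assume fin: "finite ?P"
  have "finite (A - clifford_part)"
    using assms(1) unfolding almost_clifford_def by (rule finite_subset[rotated]) auto
  hence infB: "infinite (A \<inter> clifford_part)" using assms(2)
    by (metis Int_Diff_Un finite_UnI)
  have "A \<inter> clifford_part = (\<Union>c\<in>?P. {x \<in> A \<inter> clifford_part. x * x = c})" by blast
  then obtain c where "c \<in> ?P" and infF: "infinite {x \<in> A \<inter> clifford_part. x * x = c}"
    using infB fin by auto
  let ?F = "{x \<in> A \<inter> clifford_part. x * x = c}"
  obtain a where a: "a \<in> ?F" using infF not_finite_existsD by blast
  then obtain Ga ea where Ga: "a \<in> Ga" "\<forall>x\<in>Ga. \<forall>y\<in>Ga. x * y \<in> Ga" "ea \<in> Ga"
    "\<forall>g\<in>Ga. ea * g = g \<and> g * ea = g" "\<forall>g\<in>Ga. \<exists>h\<in>Ga. g * h = ea \<and> h * g = ea"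
    using in_cp by blast
  obtain a' where a': "a' * a = ea" using Ga by blast
  have ey: "ea * y = y" if y: "y \<in> ?F" for y
  proof -
    obtain Gy ey where Gy: "y \<in> Gy" "\<forall>x\<in>Gy. \<forall>y\<in>Gy. x * y \<in> Gy" "ey \<in> Gy"
      "\<forall>g\<in>Gy. ey * g = g \<and> g * ey = g" "\<forall>g\<in>Gy. \<exists>h\<in>Gy. g * h = ey \<and> h * g = ey"
      using in_cp y by blast
    have "c \<in> Ga" using Ga a by auto
    moreover have "c \<in> Gy" using Gy y by auto
    ultimately have "ea = ey" using ident_unique[OF Ga(3-5) Gy(3-5)] by blast
    thus ?thesis using Gy by simp
  qed
  have "inj_on (\<lambda>y. a * y) ?F"
  proof (rule inj_onI)
    fix y z assume y: "y \<in> ?F" and z: "z \<in> ?F" and eq: "a * y = a * z"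
    have "a' * (a * y) = a' * (a * z)" using eq by simp
    hence "ea * y = ea * z" using a' by (simp add: mult.assoc[symmetric])
    thus "y = z" using ey[OF y] ey[OF z] by simp
  qed
  hence "infinite ((\<lambda>y. a * y) ` ?F)" using infF finite_imageD by blast
  moreover have "(\<lambda>y. a * y) ` ?F \<subseteq> ?P" using a by blast
  ultimately show False using fin finite_subset by blast
qed

end
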